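(* The number of cycles of the Collatz map $T$ contained in the positive integers (including the trivial cycle $\{1,2\}$) is bounded above by the index \[ \operatorname{ind}(Id-\mathcal{T})=\dim\operatorname{Ker}(Id-\mathcal{T})-\dim\operatorname{Ker}(Id-\mathcal{T})^* \] of the operator $Id-\mathcal{T}\in\mathcal{L}(H^2(D))$.
   Context: $T:\mathbb{Z}\to\mathbb{Z}$ is the Collatz map $T(n)=\frac{3n+1}2$ ($n$ odd), $T(n)=\frac n2$ ($n$ even); a cycle is a finite set $\{n_1,\dots,n_k\}$ with $T(n_i)=n_{i+1}$, $T(n_k)=n_1$. $D$ is the open unit disk and $H^2(D)$ the Hardy space of holomorphic $\sum a_nz^n$ on $D$ with $\sum|a_n|^2<\infty$. $\mathcal{T}\in\mathcal{L}(H^2(D))$ is given by $\mathcal{T}\big(\sum_{n\ge0}a_nz^n\big)=\sum_{n\ge0}a_nz^{T(n)}$, and $(Id-\mathcal{T})^*$ is the Hilbert-space adjoint. If $\dim\operatorname{Ker}(Id-\mathcal{T})=\infty$ the index is interpreted as $+\infty$. *)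

theory Defs
  imports "HOL-Analysis.Analysis"
begin

definition collatz :: "int \<Rightarrow> int" where
  "collatz n = (if odd n then (3 * n + 1) div 2 else n div 2)"

definition is_cycle :: "int set \<Rightarrow> bool" where
  "is_cycle S \<longleftrightarrow> (\<exists>n k. 0 < k \<and> (collatz ^^ k) n = n \<and> S = {(collatz ^^ i) n | i. i < k})"

definition positive_cycles :: "int set set" where
  "positive_cycles = {S. is_cycle S \<and> S \<subseteq> {0<..}}"

definition num_positive_cycles :: ereal where
  "num_positive_cycles = (if finite positive_cycles then ereal (real (card positive_cycles)) else \<infinity>)"

text \<open>H^2(D) identified with its Taylor coefficient sequences (isometric identification):
  f = \<Sum> a_n z^n in H^2 iff (a_n) is square summable, with <f,g> = \<Sum> a_n conj(b_n).\<close>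
definition H2 :: "(nat \<Rightarrow> complex) set" where
  "H2 = {a. summable (\<lambda>n. (cmod (a n))\<^sup>2)}"

definition H2_inner :: "(nat \<Rightarrow> complex) \<Rightarrow> (nat \<Rightarrow> complex) \<Rightarrow> complex" where
  "H2_inner a b = (\<Sum>n. a n * cnj (b n))"

text \<open>Collatz map restricted to the nonnegative integers (exponents).\<close>
definition collatz_nat :: "nat \<Rightarrow> nat" where
  "collatz_nat n = (if odd n then (3 * n + 1) div 2 else n div 2)"

text \<open>The operator: \<Sum> a_n z^n \<mapsto> \<Sum> a_n z^(T n); coefficient of z^m is the sum over T-preimages of m.\<close>
definition TOp :: "(nat \<Rightarrow> complex) \<Rightarrow> (nat \<Rightarrow> complex)" where
  "TOp a = (\<lambda>m. \<Sum>n\<in>{n. collatz_nat n = m}. a n)"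

definition IdmT :: "(nat \<Rightarrow> complex) \<Rightarrow> (nat \<Rightarrow> complex)" where
  "IdmT a = (\<lambda>m. a m - TOp a m)"

definition H2_adjoint :: "((nat \<Rightarrow> complex) \<Rightarrow> (nat \<Rightarrow> complex)) \<Rightarrow> (nat \<Rightarrow> complex) \<Rightarrow> (nat \<Rightarrow> complex)" where
  "H2_adjoint A b = (THE c. c \<in> H2 \<and> (\<forall>a\<in>H2. H2_inner (A a) b = H2_inner a c))"

definition H2_kernel :: "((nat \<Rightarrow> complex) \<Rightarrow> (nat \<Rightarrow> complex)) \<Rightarrow> (nat \<Rightarrow> complex) set" where
  "H2_kernel A = {a \<in> H2. A a = (\<lambda>_. 0)}"

definition c_lin_indep :: "(nat \<Rightarrow> complex) set \<Rightarrow> bool" where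
  "c_lin_indep S \<longleftrightarrow> (\<forall>c. (\<lambda>m. \<Sum>v\<in>S. c v * v m) = (\<lambda>_. 0) \<longrightarrow> (\<forall>v\<in>S. c v = 0))"

definition c_dim :: "(nat \<Rightarrow> complex) set \<Rightarrow> enat" where
  "c_dim V = Sup {enat (card S) | S. finite S \<and> S \<subseteq> V \<and> c_lin_indep S}"

definition H2_index :: "((nat \<Rightarrow> complex) \<Rightarrow> (nat \<Rightarrow> complex)) \<Rightarrow> ereal" where
  "H2_index A = (if c_dim (H2_kernel A) = \<infinity> then \<infinity>
     else ereal_of_enat (c_dim (H2_kernel A)) - ereal_of_enat (c_dim (H2_kernel (H2_adjoint A))))"

end

theory Submission
  imports Defs
begin

lemma cn_even[simp]: "collatz_nat (2*k) = k" by (simp add: collatz_nat_def)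
lemma cn_odd[simp]: "collatz_nat (2*k+1) = 3*k+2" by (simp add: collatz_nat_def)
lemma pre_eq: "{n. collatz_nat n = m} = {2*m} \<union> (if m mod 3 = 2 then {2*(m div 3)+1} else {})"
proof (intro set_eqI iffI)
  fix n assume "n \<in> {n. collatz_nat n = m}"
  hence h: "collatz_nat n = m" by simp
  show "n \<in> {2*m} \<union> (if m mod 3 = 2 then {2*(m div 3)+1} else {})"
  proof (cases "even n")
    case True then obtain k where "n = 2*k" by blast
    with h show ?thesis by simp
  next
    case False then obtain k where "n = 2*k+1" using oddE by blast
    hence "collatz_nat n = 3*k+2" using cn_odd by presburger
    with h have "m = 3*k+2" by simp
    hence "m mod 3 = 2" "m div 3 = k" by presburger+
    with `n = 2*k+1` show ?thesis by simp
  qed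
next
  fix n assume a: "n \<in> {2*m} \<union> (if m mod 3 = 2 then {2*(m div 3)+1} else {})"
  show "n \<in> {n. collatz_nat n = m}"
  proof (cases "n = 2*m")
    case True then show ?thesis by simp
  next
    case False
    with a have "m mod 3 = 2" "n = 2*(m div 3)+1" by (auto split: if_splits)
    hence "collatz_nat n = 3*(m div 3)+2" using cn_odd by metis
    moreover have "3*(m div 3)+2 = m" using `m mod 3 = 2` by presburger
    ultimately show ?thesis by simp
  qed
qed
lemma TOp_eq: "TOp a m = a (2*m) + (if m mod 3 = 2 then a (2*(m div 3)+1) else 0)"
  unfolding TOp_def pre_eq by auto

lemma sub_l2:
  assumes "summable (\<lambda>n. (norm (a n))^2)" "strict_mono g"
  shows "summable (\<lambda>n. (norm (a (g n)))^2)"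
proof -
  let ?f = "\<lambda>n. if n \<in> range g then (norm (a n))^2 else 0"
  have "summable ?f"
    by (rule summable_comparison_test[OF _ assms(1)]) auto
  hence "summable (\<lambda>n. ?f (g n))"
    by (subst summable_mono_reindex[OF assms(2)]) auto
  thus ?thesis by simp
qed

lemma prod_l2:
  fixes x y :: "nat \<Rightarrow> complex"
  assumes "summable (\<lambda>n. (norm (x n))^2)" "summable (\<lambda>n. (norm (y n))^2)"
  shows "summable (\<lambda>n. x n * cnj (y n))"
proof (rule summable_comparison_test[OF _ summable_add[OF assms]])
  show "\<exists>N. \<forall>n\<ge>N. norm (x n * cnj (y n)) \<le> (norm (x n))^2 + (norm (y n))^2"
  proof (intro exI allI impI)
    fix n
    have "norm (x n) * norm (y n) \<le> (norm (x n))^2 + (norm (y n))^2"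
      using sum_squares_bound[of "norm (x n)" "norm (y n)"] zero_le_power2[of "norm (x n)"] zero_le_power2[of "norm (y n)"]
      by linarith
    thus "norm (x n * cnj (y n)) \<le> (norm (x n))^2 + (norm (y n))^2"
      by (simp add: norm_mult)
  qed
qed

lemma diff_l2:
  fixes x y :: "nat \<Rightarrow> complex"
  assumes "summable (\<lambda>n. (norm (x n))^2)" "summable (\<lambda>n. (norm (y n))^2)"
  shows "summable (\<lambda>n. (norm (x n - y n))^2)"
proof (rule summable_comparison_test[OF _ summable_add[OF summable_mult[OF assms(1), of 2] summable_mult[OF assms(2), of 2]]])
  show "\<exists>N. \<forall>n\<ge>N. norm ((norm (x n - y n))^2) \<le> 2 * (norm (x n))^2 + 2 * (norm (y n))^2"
  proof (intro exI allI impI)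
    fix n
    have t: "norm (x n - y n) \<le> norm (x n) + norm (y n)" by (rule norm_triangle_ineq4)
    have "(norm (x n - y n))^2 \<le> (norm (x n) + norm (y n))^2"
      using t by (simp add: power_mono)
    also have "\<dots> \<le> 2 * (norm (x n))^2 + 2 * (norm (y n))^2"
      using sum_squares_bound[of "norm (x n)" "norm (y n)"] power2_sum[of "norm (x n)" "norm (y n)"]
      by linarith
    finally show "norm ((norm (x n - y n))^2) \<le> 2 * (norm (x n))^2 + 2 * (norm (y n))^2" by simp
  qed
qed

lemma sm2: "strict_mono (\<lambda>k::nat. 2*k)" by (simp add: strict_mono_def)
lemma sm21: "strict_mono (\<lambda>k::nat. 2*k+1)" by (simp add: strict_mono_def)
lemma sm32: "strict_mono (\<lambda>k::nat. 3*k+2)" by (simp add: strict_mono_def)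

lemma split_eo:
  fixes P :: "nat \<Rightarrow> 'a::{real_normed_vector}"
  assumes "summable (\<lambda>k. P (2*k))" "summable (\<lambda>k. P (2*k+1))"
  shows "summable P \<and> suminf P = (\<Sum>k. P (2*k)) + (\<Sum>k. P (2*k+1))"
proof -
  define Pe where "Pe n = (if even n then P n else 0)" for n
  define Po where "Po n = (if odd n then P n else 0)" for n
  have ze: "Pe n = 0" if "n \<notin> range (\<lambda>k. 2*k)" for n
    using that unfolding Pe_def by (auto elim!: evenE)
  have zo: "Po n = 0" if "n \<notin> range (\<lambda>k. 2*k+1)" for n
    using that unfolding Po_def by (auto elim!: oddE)
  have e1: "(\<lambda>k. Pe (2*k)) = (\<lambda>k. P (2*k))" by (auto simp: Pe_def)
  have o1: "(\<lambda>k. Po (2*k+1)) = (\<lambda>k. P (2*k+1))" by (auto simp: Po_def)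
  have se: "summable Pe" using summable_mono_reindex[OF sm2, of Pe] ze e1 assms(1) by auto
  have so: "summable Po" using summable_mono_reindex[OF sm21, of Po] zo o1 assms(2) by auto
  have PP: "P = (\<lambda>n. Pe n + Po n)" by (auto simp: Pe_def Po_def)
  have "suminf Pe = (\<Sum>k. P (2*k))" using suminf_mono_reindex[OF sm2, of Pe] ze e1 by auto
  moreover have "suminf Po = (\<Sum>k. P (2*k+1))" using suminf_mono_reindex[OF sm21, of Po] zo o1 by auto
  ultimately show ?thesis using PP se so summable_add[OF se so] suminf_add[OF se so] by metis
qed



lemma cn_odd_Suc[simp]: "collatz_nat (Suc (2*k)) = Suc (Suc (3*k))" using cn_odd by simp

lemma l2_of: "a \<in> H2 \<Longrightarrow> summable (\<lambda>n. (norm (a n))^2)" by (simp add: H2_def)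

lemma inner_adj:
  assumes a: "a \<in> H2" and b: "b \<in> H2"
  shows "H2_inner (IdmT a) b = H2_inner a (\<lambda>n. b n - b (collatz_nat n))"
proof -
  have la: "summable (\<lambda>n. (norm (a n))^2)" using a by (simp add: H2_def)
  have lb: "summable (\<lambda>n. (norm (b n))^2)" using b by (simp add: H2_def)
  have A: "summable (\<lambda>n. a n * cnj (b n))" by (rule prod_l2[OF la lb])
  have a2: "summable (\<lambda>k. (norm (a (2*k)))^2)" by (rule sub_l2[OF la sm2])
  have a21: "summable (\<lambda>k. (norm (a (2*k+1)))^2)" by (rule sub_l2[OF la sm21])
  have b32: "summable (\<lambda>k. (norm (b (3*k+2)))^2)" by (rule sub_l2[OF lb sm32])
  have E: "summable (\<lambda>k. a (2*k) * cnj (b k))" by (rule prod_l2[OF a2 lb])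
  have O: "summable (\<lambda>k. a (2*k+1) * cnj (b (3*k+2)))" by (rule prod_l2[OF a21 b32])
  define G where "G m = (if m mod 3 = 2 then a (2*(m div 3)+1) else 0) * cnj (b m)" for m
  have Gz: "G m = 0" if "m \<notin> range (\<lambda>k. 3*k+2)" for m
  proof (cases "m mod 3 = 2")
    case True
    hence "m = 3*(m div 3)+2" by presburger
    hence "m \<in> range (\<lambda>k. 3*k+2)" by blast
    with that show ?thesis by blast
  qed (simp add: G_def)
  have Gr: "(\<lambda>k. G (3*k+2)) = (\<lambda>k. a (2*k+1) * cnj (b (3*k+2)))"
  proof
    fix k :: nat
    have "(3*k+2) mod 3 = 2" "(3*k+2) div 3 = k" by presburger+
    thus "G (3*k+2) = a (2*k+1) * cnj (b (3*k+2))" by (simp add: G_def)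
  qed
  have sG: "summable G" using summable_mono_reindex[OF sm32, of G] Gz Gr O by auto
  have iG: "suminf G = (\<Sum>k. a (2*k+1) * cnj (b (3*k+2)))"
    using suminf_mono_reindex[OF sm32, of G] Gz Gr by auto
  have L: "(\<lambda>m. IdmT a m * cnj (b m)) = (\<lambda>m. a m * cnj (b m) - a (2*m) * cnj (b m) - G m)"
    by (auto simp: IdmT_def TOp_eq G_def algebra_simps)
  have LHS: "H2_inner (IdmT a) b = (\<Sum>m. a m * cnj (b m)) - (\<Sum>k. a (2*k) * cnj (b k)) - suminf G"
    unfolding H2_inner_def L using suminf_diff[OF summable_diff[OF A E] sG] suminf_diff[OF A E] by simp
  define P where "P n = a n * cnj (b (collatz_nat n))" for n
  have P2: "(\<lambda>k. P (2*k)) = (\<lambda>k. a (2*k) * cnj (b k))" by (simp add: P_def)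
  have P21: "(\<lambda>k. P (2*k+1)) = (\<lambda>k. a (2*k+1) * cnj (b (3*k+2)))" by (simp add: P_def)
  have sP: "summable P \<and> suminf P = (\<Sum>k. P (2*k)) + (\<Sum>k. P (2*k+1))"
    by (rule split_eo) (simp_all only: P2 P21 E O)
  have R: "(\<lambda>n. a n * cnj (b n - b (collatz_nat n))) = (\<lambda>n. a n * cnj (b n) - P n)"
    by (auto simp: P_def algebra_simps)
  have "H2_inner a (\<lambda>n. b n - b (collatz_nat n)) = (\<Sum>m. a m * cnj (b m)) - suminf P"
    unfolding H2_inner_def R using suminf_diff[OF A, of P] sP by simp
  with LHS iG sP P2 P21 show ?thesis by simp
qed



lemma delta_H2: "(\<lambda>n. if n = k then 1 else 0) \<in> H2"
proof -
  have "summable (\<lambda>n. (cmod (if n = k then 1 else 0::complex))^2)"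
    by (rule summable_finite[of "{k}"]) auto
  thus ?thesis unfolding H2_def by simp
qed

lemma inner_delta: "H2_inner (\<lambda>n. if n = k then 1 else 0) c = cnj (c k)"
proof -
  have "(\<lambda>n. (if n = k then 1 else 0) * cnj (c n)) = (\<lambda>n. if n = k then cnj (c n) else 0)" by auto
  thus ?thesis unfolding H2_inner_def using sums_single[of k "\<lambda>n. cnj (c n)"] sums_unique by metis
qed

lemma Tb_H2: assumes "b \<in> H2" shows "(\<lambda>n. b (collatz_nat n)) \<in> H2"
proof -
  have lb: "summable (\<lambda>n. (norm (b n))^2)" using assms by (simp add: H2_def)
  have b32: "summable (\<lambda>k. (norm (b (3*k+2)))^2)" by (rule sub_l2[OF lb sm32])
  have "summable (\<lambda>n. (norm (b (collatz_nat n)))^2)"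
    using split_eo[of "\<lambda>n. (norm (b (collatz_nat n)))^2"] lb b32 by simp
  thus ?thesis by (simp add: H2_def)
qed

lemma adj_eq: assumes b: "b \<in> H2" shows "H2_adjoint IdmT b = (\<lambda>n. b n - b (collatz_nat n))"
  unfolding H2_adjoint_def
proof (rule the1_equality)
  let ?c = "\<lambda>n. b n - b (collatz_nat n)"
  have cH: "?c \<in> H2" using diff_l2[OF l2_of[OF b] l2_of[OF Tb_H2[OF b]]] by (simp add: H2_def)
  show P: "?c \<in> H2 \<and> (\<forall>a\<in>H2. H2_inner (IdmT a) b = H2_inner a ?c)"
    using cH inner_adj b by blast
  show "\<exists>!c. c \<in> H2 \<and> (\<forall>a\<in>H2. H2_inner (IdmT a) b = H2_inner a c)"
  proof (rule ex1I)
    show "?c \<in> H2 \<and> (\<forall>a\<in>H2. H2_inner (IdmT a) b = H2_inner a ?c)" by (rule P)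
  next
    fix c assume h: "c \<in> H2 \<and> (\<forall>a\<in>H2. H2_inner (IdmT a) b = H2_inner a c)"
    show "c = ?c"
    proof
      fix k
      have "H2_inner (\<lambda>n. if n = k then 1 else 0) c = H2_inner (\<lambda>n. if n = k then 1 else 0) ?c"
        using h P delta_H2[of k] by metis
      hence "cnj (c k) = cnj (?c k)" by (simp only: inner_delta)
      thus "c k = ?c k" by (metis complex_cnj_cancel_iff)
    qed
  qed
qed

lemma kstar: assumes "b \<in> H2_kernel (H2_adjoint IdmT)" "m \<noteq> 0" shows "b m = 0"
proof -
  have b: "b \<in> H2" and z: "H2_adjoint IdmT b = (\<lambda>_. 0)" using assms(1) by (auto simp: H2_kernel_def)
  have fx: "b n = b (collatz_nat n)" for n using fun_cong[OF z[unfolded adj_eq[OF b]], of n] by simp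
  have it: "b (2^j * m) = b m" for j
  proof (induction j)
    case (Suc j)
    have "b (2^Suc j * m) = b (collatz_nat (2 * (2^j * m)))" using fx[of "2 * (2^j * m)"] by (simp add: mult.assoc)
    also have "\<dots> = b m" using Suc by simp
    finally show ?case .
  qed simp
  have lim: "(\<lambda>n. (norm (b n))^2) \<longlonglongrightarrow> 0" using summable_LIMSEQ_zero[OF l2_of[OF b]] .
  have sm: "strict_mono (\<lambda>j. 2^j * m)" using assms(2) by (auto simp: strict_mono_def)
  have "((\<lambda>n. (norm (b n))^2) \<circ> (\<lambda>j. 2^j * m)) \<longlonglongrightarrow> 0" by (rule LIMSEQ_subseq_LIMSEQ[OF lim sm])
  hence "(\<lambda>j. (norm (b m))^2) \<longlonglongrightarrow> 0" by (simp add: o_def it)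
  hence "(norm (b m))^2 = 0" by (simp add: LIMSEQ_const_iff)
  thus ?thesis by simp
qed



lemma collatz_int: "collatz (int n) = int (collatz_nat n)"
  unfolding collatz_def collatz_nat_def by (auto simp: zdiv_int)

lemma cyc_per: assumes "(f^^k) n = n" shows "(f^^(i + k*j)) n = (f^^i) n"
proof (induction j)
  case (Suc j)
  have e: "i + k*Suc j = (i+k*j) + k" by simp
  have "(f^^(i + k*Suc j)) n = (f^^(i + k*j)) ((f^^k) n)"
    unfolding e by (simp only: funpow_add o_apply)
  also have "\<dots> = (f^^i) n" using Suc assms by simp
  finally show ?case .
qed simp

lemma cyc_range:
  assumes "0 < k" "(collatz ^^ k) n = n" "S = {(collatz ^^ i) n | i. i < k}"
  shows "S = range (\<lambda>i. (collatz^^i) n)"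
proof
  show "range (\<lambda>i. (collatz^^i) n) \<subseteq> S"
  proof
    fix y assume "y \<in> range (\<lambda>i. (collatz^^i) n)"
    then obtain i where y: "y = (collatz^^i) n" by blast
    have "(collatz^^(i mod k + k*(i div k))) n = (collatz^^(i mod k)) n" by (rule cyc_per[OF assms(2)])
    moreover have "i mod k + k*(i div k) = i" by simp
    ultimately have "y = (collatz^^(i mod k)) n" using y by simp
    moreover have "i mod k < k" using assms(1) by simp
    ultimately show "y \<in> S" using assms(3) by blast
  qed
qed (use assms(3) in blast)

lemma cyc_orbit: assumes "is_cycle S" "x \<in> S" shows "S = range (\<lambda>i. (collatz^^i) x)"
proof -
  obtain n k where k: "0 < k" "(collatz ^^ k) n = n" "S = {(collatz ^^ i) n | i. i < k}"
    using assms(1) unfolding is_cycle_def by blast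
  have R: "S = range (\<lambda>i. (collatz^^i) n)" by (rule cyc_range[OF k])
  then obtain j where x: "x = (collatz^^j) n" using assms(2) by blast
  have "range (\<lambda>i. (collatz^^i) x) = range (\<lambda>i. (collatz^^i) n)"
  proof
    show "range (\<lambda>i. (collatz^^i) x) \<subseteq> range (\<lambda>i. (collatz^^i) n)"
    proof
      fix y assume "y \<in> range (\<lambda>i. (collatz^^i) x)"
      then obtain i where "y = (collatz^^i) x" by blast
      hence "y = (collatz^^(i+j)) n" using x by (simp add: funpow_add)
      thus "y \<in> range (\<lambda>i. (collatz^^i) n)" by blast
    qed
    show "range (\<lambda>i. (collatz^^i) n) \<subseteq> range (\<lambda>i. (collatz^^i) x)"
    proof
      fix y assume "y \<in> range (\<lambda>i. (collatz^^i) n)"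
      then obtain i where y: "y = (collatz^^i) n" by blast
      have kj: "j \<le> k*j" using k(1) by (cases k) auto
      have "(collatz^^(i + k*j)) n = y" using cyc_per[OF k(2)] y by simp
      moreover have "i + k*j = (i + k*j - j) + j" using kj by linarith
      ultimately have "y = (collatz^^(i + k*j - j)) x" using x by (metis funpow_add o_apply)
      thus "y \<in> range (\<lambda>i. (collatz^^i) x)" by blast
    qed
  qed
  with R show ?thesis by simp
qed

lemma cyc_finite: "is_cycle S \<Longrightarrow> finite S"
  unfolding is_cycle_def by auto

lemma cyc_ne: "is_cycle S \<Longrightarrow> S \<noteq> {}"
  unfolding is_cycle_def by blast

lemma cyc_image: assumes "is_cycle S" shows "collatz ` S = S"
proof -
  obtain n k where k: "0 < k" "(collatz ^^ k) n = n" "S = {(collatz ^^ i) n | i. i < k}"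
    using assms(1) unfolding is_cycle_def by blast
  have R: "S = range (\<lambda>i. (collatz^^i) n)" by (rule cyc_range[OF k])
  show ?thesis
  proof
    show "collatz ` S \<subseteq> S" using R by (auto simp del: funpow.simps simp: funpow.simps(2)[symmetric, unfolded o_def])
      (metis funpow.simps(2) o_apply rangeI)
    show "S \<subseteq> collatz ` S"
    proof
      fix y assume "y \<in> S"
      then obtain i where y: "y = (collatz^^i) n" using R by blast
      have "(collatz^^(i+k)) n = y" using cyc_per[OF k(2), of i 1] y by simp
      moreover have "i + k = Suc (i + k - 1)" using k(1) by simp
      ultimately have "y = collatz ((collatz^^(i+k-1)) n)" by (metis funpow.simps(2) o_apply)
      thus "y \<in> collatz ` S" using R by blast
    qed
  qed
qed

lemma cyc_inj: "is_cycle S \<Longrightarrow> inj_on collatz S"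
  using eq_card_imp_inj_on cyc_image cyc_finite by metis

lemma cyc_disj: "is_cycle S1 \<Longrightarrow> is_cycle S2 \<Longrightarrow> x \<in> S1 \<Longrightarrow> x \<in> S2 \<Longrightarrow> S1 = S2"
  using cyc_orbit by metis

lemma cyc0: "is_cycle {0}"
  unfolding is_cycle_def
  by (rule exI[of _ 0], rule exI[of _ 1]) (auto simp: collatz_def)



definition ind :: "int set \<Rightarrow> nat \<Rightarrow> complex" where
  "ind S = (\<lambda>m. if int m \<in> S then 1 else 0)"

lemma pre_finite: "finite {n. collatz_nat n = m}"
  unfolding pre_eq by simp

lemma ind_ker: assumes c: "is_cycle S" and nn: "S \<subseteq> {0..}" shows "ind S \<in> H2_kernel IdmT"
proof -
  have fS: "finite S" using cyc_finite[OF c] .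
  have sub: "{m. int m \<in> S} \<subseteq> nat ` S" by force
  have fin: "finite {m. int m \<in> S}" using finite_subset[OF sub] fS by blast
  have "summable (\<lambda>m. (cmod (ind S m))^2)"
    by (rule summable_finite[OF fin]) (auto simp: ind_def)
  hence H: "ind S \<in> H2" by (simp add: H2_def)
  have T: "TOp (ind S) m = ind S m" for m
  proof -
    have "TOp (ind S) m = (\<Sum>n\<in>{n. collatz_nat n = m}. if int n \<in> S then 1 else 0)"
      by (simp add: TOp_def ind_def)
    also have "\<dots> = (\<Sum>n\<in>{n\<in>{n. collatz_nat n = m}. int n \<in> S}. 1)"
      by (rule sum.inter_filter[OF pre_finite, symmetric])
    also have "\<dots> = of_nat (card {n\<in>{n. collatz_nat n = m}. int n \<in> S})" by simp
    also have "\<dots> = ind S m"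
    proof (cases "int m \<in> S")
      case True
      then obtain s where s: "s \<in> S" "collatz s = int m" using cyc_image[OF c] by force
      have "s \<ge> 0" using s nn by auto
      then obtain n0 where n0: "s = int n0" using nonneg_int_cases by blast
      have Tn0: "collatz_nat n0 = m" using s n0 collatz_int by simp
      have "{n\<in>{n. collatz_nat n = m}. int n \<in> S} = {n0}"
      proof (intro set_eqI iffI)
        fix n assume "n \<in> {n\<in>{n. collatz_nat n = m}. int n \<in> S}"
        hence "collatz_nat n = m" "int n \<in> S" by auto
        hence "collatz (int n) = collatz (int n0)" "int n \<in> S" using collatz_int Tn0 by auto
        hence "int n = int n0" using cyc_inj[OF c] s n0 by (metis inj_on_def)
        thus "n \<in> {n0}" by simp
      qed (use Tn0 s n0 in auto)
      thus ?thesis using True by (simp add: ind_def)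
    next
      case False
      have "{n\<in>{n. collatz_nat n = m}. int n \<in> S} = {}"
      proof (intro set_eqI iffI)
        fix n assume "n \<in> {n\<in>{n. collatz_nat n = m}. int n \<in> S}"
        hence "collatz_nat n = m" "int n \<in> S" by auto
        hence "collatz (int n) \<in> S" "collatz (int n) = int m"
          using imageI[of "int n" S collatz] cyc_image[OF c] collatz_int by auto
        thus "n \<in> {}" using False by simp
      qed auto
      moreover have "ind S m = 0" using False by (simp add: ind_def)
      ultimately show ?thesis by (simp only: card.empty of_nat_0)
    qed
    finally show ?thesis .
  qed
  show ?thesis using H T by (auto simp: H2_kernel_def IdmT_def)
qed

lemma ind_inj: "inj_on ind {S. S \<subseteq> {0..}}"
proof (rule inj_onI)
  fix S1 S2 assume a: "S1 \<in> {S. S \<subseteq> {0..}}" "S2 \<in> {S. S \<subseteq> {0..}}" "ind S1 = ind S2"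
  have L: "x \<in> S2" if "x \<in> S1" "S1 \<subseteq> {0..}" "ind S1 = ind S2" for x S1 S2
  proof -
    have "0 \<le> x" using that by auto
    then obtain m where xm: "x = int m" using nonneg_int_cases by blast
    have "ind S1 m = 1" using that(1) xm by (simp add: ind_def)
    hence "ind S2 m = 1" using that(3) by simp
    hence "int m \<in> S2" by (simp add: ind_def split: if_splits)
    thus ?thesis using xm by simp
  qed
  have 1: "S1 \<subseteq> {0..}" "S2 \<subseteq> {0..}" using a(1,2) by auto
  show "S1 = S2"
  proof (rule set_eqI, rule iffI)
    fix x assume "x \<in> S1" thus "x \<in> S2" using L[OF _ 1(1) a(3)] by simp
  next
    fix x assume "x \<in> S2" thus "x \<in> S1" using L[OF _ 1(2) a(3)[symmetric]] by simp
  qed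
qed

lemma ind_indep:
  assumes fC: "finite C" and cC: "\<And>S. S \<in> C \<Longrightarrow> is_cycle S \<and> S \<subseteq> {0..}"
  shows "c_lin_indep (ind ` C)"
  unfolding c_lin_indep_def
proof (intro allI impI ballI)
  fix c v assume h: "(\<lambda>m. \<Sum>v\<in>ind ` C. c v * v m) = (\<lambda>_. 0)" and v: "v \<in> ind ` C"
  then obtain S where S: "S \<in> C" "v = ind S" by blast
  obtain x where x: "x \<in> S" using cyc_ne cC S by blast
  have "0 \<le> x" using cC[OF S(1)] x by auto
  then obtain m where m: "x = int m" using nonneg_int_cases by blast
  have z: "c w * w m = 0" if wi: "w \<in> ind ` C - {v}" for w
  proof -
    obtain S' where S': "S' \<in> C" "w = ind S'" using wi by blast
    have "S' \<noteq> S" using S S' wi by blast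
    have "int m \<notin> S'"
    proof
      assume "int m \<in> S'"
      hence "S' = S" using cyc_disj[of S' S "int m"] cC[OF S(1)] cC[OF S'(1)] x m by blast
      thus False using \<open>S' \<noteq> S\<close> by simp
    qed
    thus ?thesis using S' by (simp add: ind_def)
  qed
  have s0: "(\<Sum>w\<in>ind ` C - {v}. c w * w m) = 0" by (rule sum.neutral) (use z in blast)
  have v1: "v m = 1" using S x m by (simp add: ind_def)
  have "0 = (\<Sum>w\<in>ind ` C. c w * w m)" using fun_cong[OF h, of m] by simp
  also have "\<dots> = c v * v m + (\<Sum>w\<in>ind ` C - {v}. c w * w m)"
    using sum.remove[OF finite_imageI[OF fC] v] by simp
  also have "\<dots> = c v" using s0 v1 by simp
  finally show "c v = 0" by simp
qed

lemma dim_lower: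
  assumes fP: "finite P" and sP: "P \<subseteq> positive_cycles"
  shows "enat (card P + 1) \<le> c_dim (H2_kernel IdmT)"
proof -
  let ?C = "insert {0} P"
  have cC: "is_cycle S \<and> S \<subseteq> {0..}" if Sin: "S \<in> ?C" for S
  proof (cases "S = {0}")
    case True thus ?thesis using cyc0 by simp
  next
    case False
    hence "S \<in> positive_cycles" using Sin sP by blast
    hence "is_cycle S" "S \<subseteq> {0<..}" unfolding positive_cycles_def by auto
    moreover have "{0<..} \<subseteq> {0::int..}" by auto
    ultimately show ?thesis by blast
  qed
  have n0: "{0} \<notin> P"
  proof
    assume "{0} \<in> P"
    hence "{0::int} \<subseteq> {0<..}" using sP unfolding positive_cycles_def by blast
    thus False by simp
  qed
  have "?C \<subseteq> {S. S \<subseteq> {0..}}" using cC by blast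
  hence inj: "inj_on ind ?C" by (rule inj_on_subset[OF ind_inj])
  have card: "card (ind ` ?C) = card P + 1"
    using card_image[OF inj] n0 fP by simp
  have K: "ind ` ?C \<subseteq> H2_kernel IdmT"
  proof
    fix w assume "w \<in> ind ` ?C"
    then obtain S where "S \<in> ?C" "w = ind S" by blast
    thus "w \<in> H2_kernel IdmT" using ind_ker cC by blast
  qed
  have F: "finite (ind ` ?C)" using fP by simp
  have I: "c_lin_indep (ind ` ?C)" by (rule ind_indep) (use fP cC in auto)
  have "enat (card (ind ` ?C)) \<in> {enat (card S) | S. finite S \<and> S \<subseteq> H2_kernel IdmT \<and> c_lin_indep S}"
    using K F I by blast
  hence "enat (card (ind ` ?C)) \<le> c_dim (H2_kernel IdmT)" unfolding c_dim_def by (rule Sup_upper)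
  thus ?thesis using card by simp
qed

lemma dim_upper: "c_dim (H2_kernel (H2_adjoint IdmT)) \<le> 1"
  unfolding c_dim_def
proof (rule Sup_least)
  fix x assume "x \<in> {enat (card S) | S. finite S \<and> S \<subseteq> H2_kernel (H2_adjoint IdmT) \<and> c_lin_indep S}"
  then obtain S where S: "x = enat (card S)" "finite S" "S \<subseteq> H2_kernel (H2_adjoint IdmT)" "c_lin_indep S"
    by blast
  have "card S \<le> Suc 0"
  proof (subst card_le_Suc0_iff_eq[OF S(2)], intro ballI, rule ccontr)
    fix u v assume uv: "u \<in> S" "v \<in> S" "u \<noteq> v"
    have zu: "u m = 0" if "m \<noteq> 0" for m using kstar uv S(3) that by blast
    have zv: "v m = 0" if "m \<noteq> 0" for m using kstar uv S(3) that by blast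
    define c where "c w = (if w = u then v 0 else if w = v then - u 0 else 0)" for w
    have "(\<lambda>m. \<Sum>w\<in>S. c w * w m) = (\<lambda>_. 0)"
    proof
      fix m
      have "(\<Sum>w\<in>S. c w * w m) = (\<Sum>w\<in>{u,v}. c w * w m)"
        by (rule sum.mono_neutral_right[OF S(2)]) (use uv in \<open>auto simp: c_def\<close>)
      also have "\<dots> = v 0 * u m - u 0 * v m" using uv by (simp add: c_def)
      also have "\<dots> = 0" using zu zv by (cases "m = 0") auto
      finally show "(\<Sum>w\<in>S. c w * w m) = 0" .
    qed
    moreover have ci: "(\<lambda>m. \<Sum>w\<in>S. c w * w m) = (\<lambda>_. 0) \<longrightarrow> (\<forall>w\<in>S. c w = 0)"
      using S(4)[unfolded c_lin_indep_def, THEN spec[of _ c]] .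
    ultimately have "\<forall>w\<in>S. c w = 0" by (rule rev_mp)
    hence "c u = 0" "c v = 0" using uv by auto
    hence v0: "v 0 = 0" and u0: "u 0 = 0" using uv by (auto simp: c_def)
    have "u = v"
    proof
      fix m show "u m = v m" using zu zv u0 v0 by (cases "m = 0") auto
    qed
    thus False using uv by simp
  qed
  thus "x \<le> 1" using S(1) by (simp add: one_enat_def)
qed

theorem mainTheorem8:
  shows "num_positive_cycles \<le> H2_index IdmT"
proof (cases "c_dim (H2_kernel IdmT) = \<infinity>")
  case True
  thus ?thesis by (simp add: H2_index_def)
next
  case False
  then obtain d where d: "c_dim (H2_kernel IdmT) = enat d" by (cases "c_dim (H2_kernel IdmT)") auto
  have fin: "finite positive_cycles"
  proof (rule ccontr)
    assume "infinite positive_cycles"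
    then obtain P where P: "finite P" "card P = d" "P \<subseteq> positive_cycles"
      using infinite_arbitrarily_large by blast
    have "enat (card P + 1) \<le> c_dim (H2_kernel IdmT)" by (rule dim_lower[OF P(1) P(3)])
    thus False using d P(2) by simp
  qed
  have cd: "card positive_cycles + 1 \<le> d" using dim_lower[OF fin order_refl] d by simp
  obtain e where e: "c_dim (H2_kernel (H2_adjoint IdmT)) = enat e" "e \<le> 1"
    using dim_upper by (cases "c_dim (H2_kernel (H2_adjoint IdmT))") (auto simp: one_enat_def)
  have IX: "H2_index IdmT = ereal (real d - real e)"
    using False d e by (simp add: H2_index_def)
  have NP: "num_positive_cycles = ereal (real (card positive_cycles))"
    using fin by (simp add: num_positive_cycles_def)
  have "real (card positive_cycles) \<le> real d - real e" using cd e(2) by linarith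
  thus ?thesis unfolding IX NP by simp
qed


end
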